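(* Let $K$ be a field, $n\ge1$, $\vartheta$ any one of the four types (left, right, pre-two-sided, two-sided), and $H=\{A\in M_n(K):\operatorname{Tr}A=0\}$. (i) If $\operatorname{char}K=0$ or $\operatorname{char}K=p>n$, then $H$ is a $\vartheta$-Mathieu subspace of $M_n(K)$ and it is the only $\vartheta$-Mathieu subspace of $M_n(K)$ of codimension one. (ii) If $\operatorname{char}K=p>0$ with $p\le n$, then $M_n(K)$ has no $\vartheta$-Mathieu subspace of codimension one.
   Context: $M_n(K)$ is the algebra of $n\times n$ matrices over $K$. A $K$-subspace $V$ of an algebra $\mathcal A$ is a left (resp. right) Mathieu subspace if whenever $a^m\in V$ for all $m\ge1$, then for every $b\in\mathcal A$, $ba^m\in V$ (resp. $a^mb\in V$) for all sufficiently large $m$; pre-two-sided if both left and right; two-sided if whenever $a^m\in V$ for all $m\ge1$, for all $b,c\in\mathcal A$, $ba^mc\in V$ for all sufficiently large $m$. *)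

theory Defs
  imports "HOL-Analysis.Analysis"
begin

text \<open>Matrices in M_n(K) are rendered as 'a^'n^'n with 'a a field and 'n a finite type,
  n = CARD('n) (so n >= 1 automatically). Matrix product is (**), identity is mat 1,
  trace is the library's trace.\<close>

definition mat_scale :: "'a::field \<Rightarrow> 'a^'n^'n \<Rightarrow> 'a^'n^'n" where
  "mat_scale c A = (\<chi> i j. c * A$i$j)"

lemma mat_scale_vector_space: "vector_space (mat_scale :: 'a::field \<Rightarrow> 'a^'n^'n \<Rightarrow> 'a^'n^'n)"
  by unfold_locales (simp_all add: mat_scale_def vec_eq_iff algebra_simps)

text \<open>Matrix powers with respect to matrix multiplication (not the componentwise power).\<close>
primrec mat_pow :: "'a::semiring_1^'n^'n \<Rightarrow> nat \<Rightarrow> 'a^'n^'n" where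
  "mat_pow A 0 = mat 1"
| "mat_pow A (Suc m) = A ** mat_pow A m"

definition ksubspace :: "('a::field^'n^'n) set \<Rightarrow> bool" where
  "ksubspace V = module.subspace mat_scale V"

definition codim_one :: "('a::field^'n^'n) set \<Rightarrow> bool" where
  "codim_one V \<longleftrightarrow> ksubspace V \<and>
     vector_space.dim mat_scale V + 1 = vector_space.dim mat_scale (UNIV :: ('a^'n^'n) set)"

datatype mathieu_type = LeftMS | RightMS | PreTwoSidedMS | TwoSidedMS

definition left_mathieu :: "('a::field^'n^'n) set \<Rightarrow> bool" where
  "left_mathieu V \<longleftrightarrow> ksubspace V \<and>
     (\<forall>a. (\<forall>m\<ge>1. mat_pow a m \<in> V) \<longrightarrow> (\<forall>b. \<exists>N. \<forall>m\<ge>N. b ** mat_pow a m \<in> V))"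

definition right_mathieu :: "('a::field^'n^'n) set \<Rightarrow> bool" where
  "right_mathieu V \<longleftrightarrow> ksubspace V \<and>
     (\<forall>a. (\<forall>m\<ge>1. mat_pow a m \<in> V) \<longrightarrow> (\<forall>b. \<exists>N. \<forall>m\<ge>N. mat_pow a m ** b \<in> V))"

definition two_sided_mathieu :: "('a::field^'n^'n) set \<Rightarrow> bool" where
  "two_sided_mathieu V \<longleftrightarrow> ksubspace V \<and>
     (\<forall>a. (\<forall>m\<ge>1. mat_pow a m \<in> V) \<longrightarrow> (\<forall>b c. \<exists>N. \<forall>m\<ge>N. b ** mat_pow a m ** c \<in> V))"

fun is_mathieu :: "mathieu_type \<Rightarrow> ('a::field^'n^'n) set \<Rightarrow> bool" where
  "is_mathieu LeftMS V = left_mathieu V"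
| "is_mathieu RightMS V = right_mathieu V"
| "is_mathieu PreTwoSidedMS V = (left_mathieu V \<and> right_mathieu V)"
| "is_mathieu TwoSidedMS V = two_sided_mathieu V"

end

theory Submission
  imports Defs
begin

definition emat :: "'n \<Rightarrow> 'n \<Rightarrow> 'a::field^'n^'n" where
  "emat i j = (\<chi> a b. if a = i \<and> b = j then 1 else 0)"

lemma emat_nth[simp]: "emat i j $ a $ b = (if a = i \<and> b = j then 1 else 0)"
  by (simp add: emat_def)

lemma mat_scale_nth[simp]: "mat_scale c A $ i $ j = c * A $ i $ j"
  by (simp add: mat_scale_def)

lemma emat_mult: "(emat i j ** emat k l :: 'a::field^'n^'n) = (if j = k then emat i l else 0)"
proof -
  have "(emat i j ** emat k l :: 'a::field^'n^'n) $ a $ b = (if j = k then emat i l else 0) $ a $ b" for a b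
  proof -
    have e: "\<And>x. (emat i j :: 'a::field^'n^'n) $ a $ x * emat k l $ x $ b = (if x = j then (if a = i \<and> j = k \<and> b = l then 1 else 0) else 0)"
      by auto
    have "(emat i j ** emat k l :: 'a::field^'n^'n) $ a $ b = (\<Sum>x\<in>UNIV. if x = j then (if a = i \<and> j = k \<and> b = l then 1 else 0) else 0)"
      unfolding matrix_matrix_mult_def by (simp only: vec_lambda_beta e)
    then show ?thesis by simp
  qed
  then show ?thesis by (simp add: vec_eq_iff)
qed

lemma mat_scale_mult_left: "mat_scale c A ** B = mat_scale c (A ** B)"
  by (simp add: vec_eq_iff matrix_matrix_mult_def sum_distrib_left mult.assoc)

lemma mat_scale_mult_right: "A ** mat_scale c B = mat_scale c (A ** B)"
  by (simp add: vec_eq_iff matrix_matrix_mult_def sum_distrib_left algebra_simps)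

lemma trace_mat_scale: "trace (mat_scale c A) = c * trace A"
  by (simp add: trace_def sum_distrib_left)

lemma trace_emat: "trace (emat i j :: 'a::field^'n^'n) = (if i = j then 1 else 0)"
proof -
  have "trace (emat i j :: 'a::field^'n^'n) = (\<Sum>x\<in>UNIV. if x = i then (if i = j then 1 else 0) else 0)"
    unfolding trace_def by (rule sum.cong, auto)
  then show ?thesis by simp
qed

lemma mat_pow_add: "mat_pow A (a + b) = mat_pow A a ** mat_pow A b"
  by (induction a) (simp_all add: matrix_mul_assoc)

lemma mat_pow_1[simp]: "mat_pow A 1 = A"
  by simp

lemma mat_pow_Suc': "mat_pow A (Suc m) = mat_pow A m ** A"
  using mat_pow_add[of A m 1] by simp

lemma idem_pow: "e ** e = e \<Longrightarrow> m \<ge> 1 \<Longrightarrow> mat_pow e m = e"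
proof (induction m)
  case (Suc m) then show ?case by (cases m) auto
qed simp

lemma mat_expand: "(X::'a::field^'n^'n) = (\<Sum>p\<in>UNIV. mat_scale (X $ fst p $ snd p) (emat (fst p) (snd p)))"
proof -
  have "(\<Sum>p\<in>UNIV. mat_scale (X $ fst p $ snd p) (emat (fst p) (snd p))) $ i $ j = X $ i $ j" for i j
  proof -
    have "(\<Sum>p\<in>UNIV. mat_scale (X $ fst p $ snd p) (emat (fst p) (snd p))) $ i $ j
       = (\<Sum>p\<in>UNIV. (if p = (i,j) then X $ i $ j else 0))"
      by (simp add: sum_component prod_eq_iff if_distrib[of "\<lambda>x. _ * x"] cong: if_cong, rule sum.cong, auto)
    also have "\<dots> = X $ i $ j" by simp
    finally show ?thesis .
  qed
  then show ?thesis by (simp add: vec_eq_iff)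
qed

interpretation MS: vector_space "mat_scale :: 'a::field \<Rightarrow> 'a^'n^'n \<Rightarrow> 'a^'n^'n"
  by (rule mat_scale_vector_space)

lemma MS_basis_indep: "MS.independent (range (\<lambda>p. emat (fst p) (snd p) :: 'a::field^'n^'n))"
proof (rule MS.independent_if_scalars_zero)
  show "finite (range (\<lambda>p. emat (fst p) (snd p) :: 'a::field^'n^'n))" by simp
next
  fix c :: "'a^'n^'n \<Rightarrow> 'a" and w :: "'a^'n^'n"
  assume w: "w \<in> range (\<lambda>p. emat (fst p) (snd p))"
    and s: "(\<Sum>v\<in>range (\<lambda>p. emat (fst p) (snd p)). mat_scale (c v) v) = 0"
  obtain i j :: 'n where wij: "w = emat i j" using w by auto
  have inj: "inj (\<lambda>p. emat (fst p) (snd p) :: 'a^'n^'n)"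
  proof (rule injI)
    fix p q assume "(emat (fst p) (snd p) :: 'a^'n^'n) = emat (fst q) (snd q)"
    then have "(emat (fst p) (snd p) :: 'a^'n^'n) $ fst p $ snd p = emat (fst q) (snd q) $ fst p $ snd p" by simp
    then show "p = q" by (auto split: if_splits simp: prod_eq_iff)
  qed
  have "0 = (\<Sum>v\<in>range (\<lambda>p. emat (fst p) (snd p)). mat_scale (c v) v) $ i $ j" using s by simp
  also have "\<dots> = (\<Sum>p\<in>UNIV. mat_scale (c (emat (fst p) (snd p))) (emat (fst p) (snd p) :: 'a^'n^'n)) $ i $ j"
    by (subst sum.reindex[OF inj]) simp
  also have "\<dots> = (\<Sum>p\<in>UNIV. if p = (i,j) then c (emat i j) else 0)"
    by (simp add: sum_component prod_eq_iff if_distrib[of "\<lambda>x. _ * x"] cong: if_cong, rule sum.cong, auto)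
  also have "\<dots> = c w" using wij by simp
  finally show "c w = 0" by simp
qed

lemma MS_basis_span: "MS.span (range (\<lambda>p. emat (fst p) (snd p) :: 'a::field^'n^'n)) = UNIV"
proof -
  have "X \<in> MS.span (range (\<lambda>p. emat (fst p) (snd p)))" for X :: "'a^'n^'n"
    by (subst mat_expand) (intro MS.span_sum MS.span_scale MS.span_base, auto)
  then show ?thesis by auto
qed

interpretation MS: finite_dimensional_vector_space "mat_scale :: 'a::field \<Rightarrow> 'a^'n^'n \<Rightarrow> 'a^'n^'n"
  "range (\<lambda>p. emat (fst p) (snd p))"
  by unfold_locales (simp_all add: MS_basis_indep MS_basis_span)


lemma mm_add_r: "((A::'a::field^'n^'n) + B) ** C = A ** C + B ** C"
  by (simp add: vec_eq_iff matrix_matrix_mult_def distrib_right sum.distrib)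
lemma mm_add_l: "(A::'a::field^'n^'n) ** (B + C) = A ** B + A ** C"
  by (rule matrix_add_ldistrib)
lemma mm_diff_r: "((A::'a::field^'n^'n) - B) ** C = A ** C - B ** C"
  by (simp add: vec_eq_iff matrix_matrix_mult_def left_diff_distrib sum_subtractf)
lemma mm_diff_l: "(A::'a::field^'n^'n) ** (B - C) = A ** B - A ** C"
  by (simp add: vec_eq_iff matrix_matrix_mult_def right_diff_distrib sum_subtractf)
lemma mm_zero_l[simp]: "(0::'a::field^'n^'n) ** C = 0"
  by (simp add: vec_eq_iff matrix_matrix_mult_def)
lemma mm_zero_r[simp]: "(A::'a::field^'n^'n) ** 0 = 0"
  by (simp add: vec_eq_iff matrix_matrix_mult_def)
lemma mat_scale_zero[simp]: "mat_scale c 0 = 0" "mat_scale 0 A = 0"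
  by (simp_all add: vec_eq_iff)
lemma mat_scale_one[simp]: "mat_scale 1 A = A"
  by (simp add: vec_eq_iff)

lemmas mm_simps = mm_add_r mm_add_l mm_diff_r mm_diff_l mat_scale_mult_left mat_scale_mult_right emat_mult

lemma codim_oneD:
  assumes "codim_one (V::('a::field^'n^'n) set)"
  shows "MS.subspace V \<and> (\<exists>x0. x0 \<notin> V \<and> (\<forall>Y. \<exists>c. Y - mat_scale c x0 \<in> V))"
proof -
  have sV: "MS.subspace V" and d: "MS.dim V + 1 = MS.dim (UNIV :: ('a^'n^'n) set)"
    using assms by (auto simp: codim_one_def ksubspace_def)
  have "V \<noteq> UNIV" using d by auto
  then obtain x0 where x0: "x0 \<notin> V" by auto
  have "x0 \<notin> MS.span V" using x0 sV by (metis MS.span_eq_iff)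
  then have "MS.dim (insert x0 V) = MS.dim V + 1" by (simp add: MS.dim_insert)
  hence "MS.dim (insert x0 V) = card (range (\<lambda>p. emat (fst p) (snd p) :: 'a^'n^'n))" using d by simp
  hence sp: "MS.span (insert x0 V) = UNIV" by (simp add: MS.dim_eq_full[unfolded MS.dimension_def])
  have "\<exists>c. Y - mat_scale c x0 \<in> V" for Y
  proof -
    have "Y \<in> MS.span (insert x0 V)" using sp by simp
    then obtain k where "Y - mat_scale k x0 \<in> MS.span V" by (auto simp: MS.span_insert)
    then show ?thesis using sV by (metis MS.span_eq_iff)
  qed
  then show ?thesis using sV x0 by blast
qed

lemma codim_oneI:
  assumes sV: "MS.subspace (V::('a::field^'n^'n) set)" and x0: "x0 \<notin> V"
    and all: "\<And>Y. \<exists>c. Y - mat_scale c x0 \<in> V"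
  shows "codim_one V"
proof -
  have "x0 \<notin> MS.span V" using x0 sV by (metis MS.span_eq_iff)
  then have di: "MS.dim (insert x0 V) = MS.dim V + 1" by (simp add: MS.dim_insert)
  have "MS.span (insert x0 V) = UNIV"
  proof -
    have "Y \<in> MS.span (insert x0 V)" for Y
      using all[of Y] sV by (auto simp: MS.span_insert intro: MS.span_base)
    then show ?thesis by auto
  qed
  hence "MS.dim (insert x0 V) = card (range (\<lambda>p. emat (fst p) (snd p) :: 'a^'n^'n))"
    by (simp add: MS.dim_eq_full[unfolded MS.dimension_def])
  then show ?thesis using di sV by (simp add: codim_one_def ksubspace_def)
qed

definition linf :: "('a::field^'n^'n \<Rightarrow> 'a) \<Rightarrow> bool" where
  "linf \<phi> \<longleftrightarrow> (\<forall>X Y. \<phi> (X + Y) = \<phi> X + \<phi> Y) \<and> (\<forall>c X. \<phi> (mat_scale c X) = c * \<phi> X)"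

lemma linf_sum:
  assumes "linf \<phi>" and "finite S"
  shows "\<phi> (sum f S) = (\<Sum>x\<in>S. \<phi> (f x))"
  using assms(2)
proof (induction S rule: finite_induct)
  case empty
  have "\<phi> 0 = \<phi> (mat_scale 0 0)" by simp
  also have "\<dots> = 0" using assms(1) unfolding linf_def by (metis mult_zero_left)
  finally show ?case by simp
next
  case (insert x F) then show ?case using assms(1) by (simp add: linf_def)
qed

lemma linf_expand:
  assumes "linf \<phi>"
  shows "\<phi> X = (\<Sum>p\<in>UNIV. X $ fst p $ snd p * \<phi> (emat (fst p) (snd p)))"
  apply (subst mat_expand)
  using assms by (simp add: linf_sum linf_def)

lemma linf_add: "linf \<phi> \<Longrightarrow> \<phi> (X + Y) = \<phi> X + \<phi> Y"
  by (simp add: linf_def)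
lemma linf_scale: "linf \<phi> \<Longrightarrow> \<phi> (mat_scale c X) = c * \<phi> X"
  by (simp add: linf_def)
lemma linf_zero: "linf \<phi> \<Longrightarrow> \<phi> 0 = 0"
  using linf_scale[of \<phi> 0 0] by simp

lemma codim_one_functional:
  assumes "codim_one (V::('a::field^'n^'n) set)"
  shows "\<exists>\<phi>. linf \<phi> \<and> (\<forall>X. X \<in> V \<longleftrightarrow> \<phi> X = 0) \<and> (\<exists>X. \<phi> X \<noteq> 0)"
proof -
  obtain x0 where sV: "MS.subspace V" and x0: "x0 \<notin> V" and all: "\<And>Y. \<exists>c. Y - mat_scale c x0 \<in> V"
    using codim_oneD[OF assms] by blast
  define \<phi> where "\<phi> Y = (SOME c. Y - mat_scale c x0 \<in> V)" for Y
  have sp: "Y - mat_scale (\<phi> Y) x0 \<in> V" for Y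
    unfolding \<phi>_def using all[of Y] by (rule someI_ex)
  have uniq: "c = \<phi> Y" if "Y - mat_scale c x0 \<in> V" for Y c
  proof (rule ccontr)
    assume ne: "c \<noteq> \<phi> Y"
    have "(Y - mat_scale c x0) - (Y - mat_scale (\<phi> Y) x0) \<in> V"
      by (rule MS.subspace_diff[OF sV that sp])
    hence "mat_scale (\<phi> Y - c) x0 \<in> V"
      by (simp add: vec_eq_iff algebra_simps)
    hence "mat_scale (inverse (\<phi> Y - c)) (mat_scale (\<phi> Y - c) x0) \<in> V"
      using sV by (rule MS.subspace_scale[rotated])
    hence "x0 \<in> V" using ne by (simp add: vec_eq_iff mult.assoc[symmetric])
    then show False using x0 by simp
  qed
  have lin: "linf \<phi>"
    unfolding linf_def
  proof (intro conjI allI)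
    fix X Y
    have "(X - mat_scale (\<phi> X) x0) + (Y - mat_scale (\<phi> Y) x0) \<in> V"
      using sp sV by (simp add: MS.subspace_add)
    hence "(X + Y) - mat_scale (\<phi> X + \<phi> Y) x0 \<in> V"
      by (simp add: vec_eq_iff algebra_simps)
    then show "\<phi> (X + Y) = \<phi> X + \<phi> Y" using uniq by metis
  next
    fix c X
    have "mat_scale c (X - mat_scale (\<phi> X) x0) \<in> V"
      using sp sV by (simp add: MS.subspace_scale)
    hence "mat_scale c X - mat_scale (c * \<phi> X) x0 \<in> V"
      by (simp add: vec_eq_iff algebra_simps)
    then show "\<phi> (mat_scale c X) = c * \<phi> X" using uniq by metis
  qed
  have mem: "X \<in> V \<longleftrightarrow> \<phi> X = 0" for X
  proof
    assume "X \<in> V" then have "X - mat_scale 0 x0 \<in> V" by simp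
    then show "\<phi> X = 0" using uniq by metis
  next
    assume "\<phi> X = 0" then show "X \<in> V" using sp[of X] by simp
  qed
  have "\<phi> x0 \<noteq> 0" using mem x0 by simp
  then show ?thesis using lin mem by blast
qed


lemma core_off:
  fixes \<phi> :: "'a::field^'n^'n \<Rightarrow> 'a"
  assumes lin: "linf \<phi>"
    and LP: "\<And>e b. e ** e = e \<Longrightarrow> \<phi> e = 0 \<Longrightarrow> \<phi> (b ** e) = 0"
    and ij: "i \<noteq> j"
  shows "\<phi> (emat i j) = 0"
proof (rule ccontr)
  assume d: "\<phi> (emat i j) \<noteq> 0"
  define t where "t = - \<phi> (emat j j) / \<phi> (emat i j)"
  define e :: "'a^'n^'n" where "e = emat j j + mat_scale t (emat i j)"
  have ee: "e ** e = e" using ij unfolding e_def by (simp add: mm_simps)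
  have "\<phi> e = \<phi> (emat j j) + t * \<phi> (emat i j)" unfolding e_def by (simp add: linf_add[OF lin] linf_scale[OF lin])
  then have pe: "\<phi> e = 0" using d unfolding t_def by simp
  have "emat i j ** e = emat i j" using ij unfolding e_def by (simp add: mm_simps)
  then show False using LP[OF ee pe, of "emat i j"] d by simp
qed

lemma core_diag0:
  fixes \<phi> :: "'a::field^'n^'n \<Rightarrow> 'a"
  assumes lin: "linf \<phi>"
    and LP: "\<And>e b. e ** e = e \<Longrightarrow> \<phi> e = 0 \<Longrightarrow> \<phi> (b ** e) = 0"
    and ij: "i \<noteq> j" and z: "\<phi> (emat i i) = 0"
  shows "\<phi> (emat j j) = 0"
proof -
  define e :: "'a^'n^'n" where "e = emat i i + emat i j"
  have ee: "e ** e = e" using ij unfolding e_def by (simp add: mm_simps)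
  have pe: "\<phi> e = 0" using z core_off[OF lin LP ij] unfolding e_def by (simp add: linf_add[OF lin])
  have "emat j i ** e = emat j i + emat j j" using ij unfolding e_def by (simp add: mm_simps)
  then show ?thesis using LP[OF ee pe, of "emat j i"] core_off[OF lin LP ij[symmetric]]
    by (simp add: linf_add[OF lin])
qed

lemma core_diag:
  fixes \<phi> :: "'a::field^'n^'n \<Rightarrow> 'a"
  assumes lin: "linf \<phi>"
    and LP: "\<And>e b. e ** e = e \<Longrightarrow> \<phi> e = 0 \<Longrightarrow> \<phi> (b ** e) = 0"
    and ij: "i \<noteq> j"
  shows "\<phi> (emat i i) = \<phi> (emat j j)"
proof (rule ccontr)
  assume ne: "\<phi> (emat i i) \<noteq> \<phi> (emat j j)"
  define a where "a = \<phi> (emat i i)"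
  define b where "b = \<phi> (emat j j)"
  have a0: "a \<noteq> 0" using core_diag0[OF lin LP ij] ne unfolding a_def by auto
  have b0: "b \<noteq> 0" using core_diag0[OF lin LP ij[symmetric]] ne unfolding b_def by auto
  have ab: "b - a \<noteq> 0" using ne unfolding a_def b_def by simp
  define \<alpha> where "\<alpha> = b / (b - a)"
  define \<beta> where "\<beta> = 1 - \<alpha>"
  define P :: "'a^'n^'n" where "P = emat i i + emat j i"
  define Q :: "'a^'n^'n" where "Q = emat i j + emat j j"
  have PP: "P ** P = P" and PQ: "P ** Q = Q" and QP: "Q ** P = P" and QQ: "Q ** Q = Q"
    using ij unfolding P_def Q_def by (simp_all add: mm_simps)
  define e where "e = mat_scale \<alpha> P + mat_scale \<beta> Q"
  have ee: "e ** e = e"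
    unfolding e_def by (simp add: mm_simps PP PQ QP QQ vec_eq_iff \<beta>_def algebra_simps power2_eq_square)
  have offs: "\<phi> (emat j i) = 0" "\<phi> (emat i j) = 0"
    using core_off[OF lin LP ij[symmetric]] core_off[OF lin LP ij] by auto
  have pe: "\<phi> e = 0"
  proof -
    have "\<phi> e = \<alpha> * a + \<beta> * b"
      unfolding e_def P_def Q_def a_def b_def by (simp add: linf_add[OF lin] linf_scale[OF lin] offs)
    also have "\<dots> = 0" unfolding \<beta>_def \<alpha>_def using ab by (simp add: field_simps)
    finally show ?thesis .
  qed
  have "emat i i ** e = mat_scale \<alpha> (emat i i) + mat_scale \<beta> (emat i j)"
    using ij unfolding e_def P_def Q_def by (simp add: mm_simps)
  then have "\<alpha> * a = 0" using LP[OF ee pe, of "emat i i"]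
    by (simp add: linf_add[OF lin] linf_scale[OF lin] offs a_def)
  moreover have "\<alpha> \<noteq> 0" unfolding \<alpha>_def using ab b0 by simp
  ultimately show False using a0 by simp
qed

lemma core_left:
  fixes \<phi> :: "'a::field^'n^'n \<Rightarrow> 'a"
  assumes lin: "linf \<phi>" and nz: "\<exists>X. \<phi> X \<noteq> 0"
    and LP: "\<And>e b. e ** e = e \<Longrightarrow> \<phi> e = 0 \<Longrightarrow> \<phi> (b ** e) = 0"
  shows "(\<exists>c. c \<noteq> 0 \<and> (\<forall>X. \<phi> X = c * trace X)) \<and> \<not> (0 < CHAR('a) \<and> CHAR('a) \<le> CARD('n))"
proof -
  obtain i0 :: 'n where True by simp
  define c where "c = \<phi> (emat i0 i0)"
  have ph: "\<phi> X = c * trace X" for X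
  proof -
    have "\<phi> X = (\<Sum>p\<in>UNIV. X $ fst p $ snd p * \<phi> (emat (fst p) (snd p)))"
      by (rule linf_expand[OF lin])
    also have "\<dots> = (\<Sum>p\<in>UNIV. if fst p = snd p then c * X $ fst p $ fst p else 0)"
    proof (rule sum.cong)
      fix p :: "'n \<times> 'n"
      show "X $ fst p $ snd p * \<phi> (emat (fst p) (snd p)) = (if fst p = snd p then c * X $ fst p $ fst p else 0)"
      proof (cases "fst p = snd p")
        case True
        have "\<phi> (emat (fst p) (fst p)) = c"
          unfolding c_def by (cases "fst p = i0") (auto intro: core_diag[OF lin LP])
        then show ?thesis using True by simp
      next
        case False then show ?thesis using core_off[OF lin LP False] by simp
      qed
    qed simp
    also have "\<dots> = (\<Sum>p\<in>(\<lambda>i. (i,i)) ` UNIV. c * X $ fst p $ fst p)"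
      by (rule sum.mono_neutral_cong_right) auto
    also have "\<dots> = c * trace X"
      by (subst sum.reindex) (auto simp: inj_on_def trace_def sum_distrib_left)
    finally show ?thesis .
  qed
  have c0: "c \<noteq> 0" using nz ph by auto
  have nchar: "\<not> (0 < CHAR('a) \<and> CHAR('a) \<le> CARD('n))"
  proof
    assume ch: "0 < CHAR('a) \<and> CHAR('a) \<le> CARD('n)"
    obtain S :: "'n set" where S: "card S = CHAR('a)"
      using ch by (meson obtain_subset_with_card_n)
    have Sne: "S \<noteq> {}" using S ch by auto
    then obtain k where kS: "k \<in> S" by auto
    define e :: "'a^'n^'n" where "e = (\<chi> x y. if x = y \<and> x \<in> S then 1 else 0)"
    have ee: "e ** e = e"
    proof -
      have "(e ** e) $ x $ y = e $ x $ y" for x y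
      proof -
        have pw: "\<And>z. e $ x $ z * e $ z $ y = (if z = x then e $ x $ y else 0)" by (auto simp: e_def)
        have "(e ** e) $ x $ y = (\<Sum>z\<in>UNIV. if z = x then e $ x $ y else 0)"
          unfolding matrix_matrix_mult_def by (simp only: vec_lambda_beta pw)
        then show ?thesis by simp
      qed
      then show ?thesis by (simp add: vec_eq_iff)
    qed
    have tr: "trace e = of_nat (card S)"
    proof -
      have "trace e = (\<Sum>x\<in>UNIV. if x \<in> S then 1 else 0)"
        unfolding trace_def e_def by simp
      also have "\<dots> = of_nat (card S)"
        by (simp add: sum.If_cases)
      finally show ?thesis .
    qed
    have pe: "\<phi> e = 0" using ph tr S by simp
    have "emat k k ** e = emat k k"
    proof -
      have "(emat k k ** e) $ x $ y = emat k k $ x $ y" for x y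
      proof -
        have pw: "\<And>z. emat k k $ x $ z * e $ z $ y = (if z = k then (if x = k \<and> y = k then 1 else 0) else 0)"
          using kS by (auto simp: e_def)
        have "(emat k k ** e) $ x $ y = (\<Sum>z\<in>UNIV. if z = k then (if x = k \<and> y = k then 1 else 0) else 0)"
          unfolding matrix_matrix_mult_def by (simp only: vec_lambda_beta pw)
        then show ?thesis by simp
      qed
      then show ?thesis by (simp add: vec_eq_iff)
    qed
    then have "\<phi> (emat k k) = 0" using LP[OF ee pe, of "emat k k"] by simp
    then show False using ph c0 by (simp add: trace_emat)
  qed
  have "\<forall>X. \<phi> X = c * trace X" using ph by blast
  then have "\<exists>c. c \<noteq> 0 \<and> (\<forall>X. \<phi> X = c * trace X)" using c0 by blast
  then show ?thesis using nchar by simp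
qed


lemma range_mv_subspace: "vec.subspace (range (\<lambda>x. (G::'a::field^'n^'n) *v x))"
  unfolding vec.subspace_def
proof (intro conjI ballI allI)
  show "0 \<in> range ((*v) G)" by (metis matrix_vector_mult_0_right rangeI)
next
  fix a b assume "a \<in> range ((*v) G)" "b \<in> range ((*v) G)"
  then obtain p q where "a = G *v p" "b = G *v q" by auto
  then have "a + b = G *v (p + q)" by (simp add: matrix_vector_right_distrib)
  then show "a + b \<in> range ((*v) G)" by simp
next
  fix c a assume "a \<in> range ((*v) G)"
  then obtain p where "a = G *v p" by auto
  then have "c *s a = G *v (c *s p)" by (simp add: vector_scalar_commute)
  then show "c *s a \<in> range ((*v) G)" by simp
qed

lemma idem_trace_aux:
  "\<forall>E::'a::field^'n^'n. E ** E = E \<longrightarrow> vec.dim (range (\<lambda>x. E *v x)) = d \<longrightarrow> trace E = of_nat d"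
proof (induction d)
  case 0
  show ?case
  proof (intro allI impI)
    fix E :: "'a^'n^'n" assume "vec.dim (range (\<lambda>x. E *v x)) = 0"
    then have "\<forall>x. E *v x = 0 *v x" by auto
    then have "E = 0" by (simp add: matrix_eq)
    then show "trace E = of_nat 0" by (simp add: trace_def)
  qed
next
  case (Suc d)
  show ?case
  proof (intro allI impI)
    fix E :: "'a^'n^'n" assume EE: "E ** E = E" and dE: "vec.dim (range (\<lambda>x. E *v x)) = Suc d"
    have "\<not> range (\<lambda>x. E *v x) \<subseteq> {0}" using dE by (metis vec.dim_eq_0 nat.simps(3))
    then obtain x where ux: "E *v x \<noteq> 0" by auto
    define u where "u = E *v x"
    have Eu: "E *v u = u" unfolding u_def by (simp add: matrix_vector_mul_assoc EE)
    obtain k where uk: "u $ k \<noteq> 0" using ux unfolding u_def by (metis vec_eq_iff zero_index)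
    define w :: "'a^'n" where "w = (\<chi> l. E $ k $ l / u $ k)"
    define F :: "'a^'n^'n" where "F = (\<chi> i j. u $ i * w $ j)"
    have wu: "(\<Sum>l\<in>UNIV. w $ l * u $ l) = 1"
    proof -
      have "(\<Sum>l\<in>UNIV. w $ l * u $ l) = (\<Sum>l\<in>UNIV. E $ k $ l * u $ l) / u $ k"
        unfolding w_def by (simp add: sum_divide_distrib)
      also have "(\<Sum>l\<in>UNIV. E $ k $ l * u $ l) = (E *v u) $ k" by (simp add: matrix_vector_mult_def)
      finally show ?thesis using Eu uk by simp
    qed
    have FF: "F ** F = F"
    proof -
      have "(\<Sum>l\<in>UNIV. (u $ i * w $ l) * (u $ l * w $ j)) = u $ i * w $ j * (\<Sum>l\<in>UNIV. w $ l * u $ l)" for i j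
        by (simp add: sum_distrib_left mult_ac)
      then show ?thesis using wu by (simp add: vec_eq_iff matrix_matrix_mult_def F_def)
    qed
    have EF: "E ** F = F"
    proof -
      have "(\<Sum>l\<in>UNIV. E $ i $ l * (u $ l * w $ j)) = (E *v u) $ i * w $ j" for i j
        unfolding matrix_vector_mult_def by (simp add: sum_distrib_right mult.assoc)
      then show ?thesis using Eu by (simp add: vec_eq_iff matrix_matrix_mult_def F_def)
    qed
    have FE: "F ** E = F"
    proof -
      have "(\<Sum>l\<in>UNIV. (u $ i * w $ l) * E $ l $ j) = u $ i * ((E ** E) $ k $ j / u $ k)" for i j
        by (simp add: matrix_matrix_mult_def w_def sum_distrib_left sum_divide_distrib mult_ac)
      then show ?thesis using EE by (simp add: vec_eq_iff matrix_matrix_mult_def F_def w_def)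
    qed
    have trF: "trace F = 1" using wu by (simp add: trace_def F_def mult.commute)
    define G where "G = E - F"
    have GG: "G ** G = G" unfolding G_def using EE EF FE FF by (simp add: mm_simps)
    have Fz: "F *v z = (\<Sum>j\<in>UNIV. w $ j * z $ j) *s u" for z
      by (simp add: vec_eq_iff matrix_vector_mult_def F_def sum_distrib_left mult_ac)
    have Gu: "G *v u = 0" unfolding G_def using Fz[of u] Eu wu
      by (simp add: matrix_vector_mult_diff_rdistrib mult.commute)
    have u0: "u \<noteq> 0" using ux u_def by simp
    have unot: "u \<notin> range (\<lambda>z. G *v z)"
    proof
      assume "u \<in> range (\<lambda>z. G *v z)"
      then obtain z where "u = G *v z" by auto
      then have "G *v u = u" using GG by (simp add: matrix_vector_mul_assoc)
      then show False using Gu u0 by simp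
    qed
    have sG: "vec.subspace (range (\<lambda>z. G *v z))" by (rule range_mv_subspace)
    have sE: "vec.subspace (range (\<lambda>z. E *v z))" by (rule range_mv_subspace)
    have rng: "range (\<lambda>z. E *v z) = vec.span (insert u (range (\<lambda>z. G *v z)))"
    proof
      show "range (\<lambda>z. E *v z) \<subseteq> vec.span (insert u (range (\<lambda>z. G *v z)))"
      proof
        fix y assume "y \<in> range (\<lambda>z. E *v z)"
        then obtain z where yz: "y = E *v z" by auto
        have "y = G *v z + (\<Sum>j\<in>UNIV. w $ j * z $ j) *s u"
          unfolding yz G_def using Fz[of z] by (simp add: matrix_vector_mult_diff_rdistrib)
        moreover have "G *v z \<in> vec.span (insert u (range (\<lambda>z. G *v z)))"
          by (rule vec.span_base) simp
        moreover have "(\<Sum>j\<in>UNIV. w $ j * z $ j) *s u \<in> vec.span (insert u (range (\<lambda>z. G *v z)))"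
          by (rule vec.span_scale, rule vec.span_base) simp
        ultimately show "y \<in> vec.span (insert u (range (\<lambda>z. G *v z)))"
          using vec.span_add by metis
      qed
    next
      show "vec.span (insert u (range (\<lambda>z. G *v z))) \<subseteq> range (\<lambda>z. E *v z)"
      proof (rule vec.span_minimal[OF _ sE])
        show "insert u (range (\<lambda>z. G *v z)) \<subseteq> range (\<lambda>z. E *v z)"
        proof
          fix y assume "y \<in> insert u (range (\<lambda>z. G *v z))"
          then consider "y = u" | z where "y = G *v z" by auto
          then show "y \<in> range (\<lambda>z. E *v z)"
          proof cases
            case 1 then show ?thesis unfolding u_def by simp
          next
            case 2
            have "y = E *v (z - (\<Sum>j\<in>UNIV. w $ j * z $ j) *s x)"
              using 2 unfolding G_def using Fz[of z]
              by (simp add: matrix_vector_mult_diff_rdistrib matrix_vector_mult_diff_distrib vector_scalar_commute u_def)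
            then show ?thesis by simp
          qed
        qed
      qed
    qed
    have "u \<notin> vec.span (range (\<lambda>z. G *v z))" using unot sG by (metis vec.span_eq_iff)
    then have "vec.dim (range (\<lambda>z. E *v z)) = vec.dim (range (\<lambda>z. G *v z)) + 1"
      unfolding rng by (simp add: vec.dim_insert)
    then have dG: "vec.dim (range (\<lambda>z. G *v z)) = d" using dE by simp
    have "trace G = of_nat d" using Suc.IH GG dG by blast
    moreover have "trace E = trace G + trace F" unfolding G_def by (simp add: trace_sub)
    ultimately show "trace E = of_nat (Suc d)" using trF by simp
  qed
qed

lemma idem_trace0:
  fixes E :: "'a::field^'n^'n"
  assumes EE: "E ** E = E" and tr: "trace E = 0" and ch: "CHAR('a) = 0 \<or> CARD('n) < CHAR('a)"
  shows "E = 0"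
proof -
  define d where "d = vec.dim (range (\<lambda>x. E *v x))"
  have "trace E = of_nat d" using idem_trace_aux EE d_def by blast
  then have dv: "CHAR('a) dvd d" using tr by (simp add: of_nat_eq_0_iff_char_dvd)
  have "d \<le> vec.dim (UNIV :: ('a^'n) set)" unfolding d_def by (rule vec.dim_subset) simp
  then have "d \<le> CARD('n)" by (metis vec_dim_card)
  then have "d = 0" using dv ch by (metis dvd_0_left_iff dvd_imp_le leD neq0_conv order.strict_trans2)
  then have "\<forall>x. E *v x = 0 *v x" unfolding d_def by auto
  then show "E = 0" by (simp add: matrix_eq)
qed


abbreviation QA :: "'a::field^'n^'n \<Rightarrow> ('a^'n^'n) set" where
  "QA A \<equiv> MS.span (range (mat_pow A))"

lemma QA_pow: "mat_pow A k \<in> QA A"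
  by (rule MS.span_base) simp

lemma QA_mult_pow_r: "X \<in> QA A \<Longrightarrow> X ** mat_pow A k \<in> QA A"
proof (induction rule: MS.span_induct_alt)
  case base then show ?case by (simp add: MS.span_zero)
next
  case (step c x y)
  then obtain j where "x = mat_pow A j" by auto
  then have "x ** mat_pow A k = mat_pow A (j + k)" by (simp add: mat_pow_add)
  then have "x ** mat_pow A k \<in> QA A" by (simp add: QA_pow)
  then show ?case using step
    by (simp add: mm_add_r mat_scale_mult_left MS.span_add MS.span_scale)
qed

lemma QA_mult: assumes X: "X \<in> QA A" shows "Y \<in> QA A \<Longrightarrow> X ** Y \<in> QA A"
proof (induction Y rule: MS.span_induct_alt)
  case base then show ?case by (simp add: MS.span_zero)
next
  case (step c x y)
  then obtain j where "x = mat_pow A j" by auto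
  then have "X ** x \<in> QA A" using X QA_mult_pow_r by simp
  then show ?case using step
    by (simp add: mm_add_l mat_scale_mult_right MS.span_add MS.span_scale)
qed

lemma QA_comm_pow: "X \<in> QA A \<Longrightarrow> X ** mat_pow A k = mat_pow A k ** X"
proof (induction rule: MS.span_induct_alt)
  case base then show ?case by simp
next
  case (step c x y)
  then obtain j where xj: "x = mat_pow A j" by auto
  have "x ** mat_pow A k = mat_pow A k ** x"
    unfolding xj by (metis mat_pow_add add.commute)
  then show ?case using step
    by (simp add: mm_add_l mm_add_r mat_scale_mult_right mat_scale_mult_left)
qed

lemma QA_comm: assumes X: "X \<in> QA A" shows "Y \<in> QA A \<Longrightarrow> X ** Y = Y ** X"
proof (induction Y rule: MS.span_induct_alt)
  case base then show ?case by simp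
next
  case (step c x y)
  then obtain j where xj: "x = mat_pow A j" by auto
  have "X ** x = x ** X" unfolding xj using QA_comm_pow X by blast
  then show ?case using step
    by (simp add: mm_add_l mm_add_r mat_scale_mult_right mat_scale_mult_left)
qed

lemma QA_matpow: "T \<in> QA A \<Longrightarrow> mat_pow T k \<in> QA A"
proof (induction k)
  case 0
  have "mat_pow A 0 \<in> QA A" by (rule QA_pow)
  then show ?case by simp
next
  case (Suc k) then show ?case by (simp add: QA_mult)
qed

lemma QA_trace:
  assumes tr: "\<forall>m\<ge>1. trace (mat_pow A m) = 0"
  shows "Y \<in> QA A \<Longrightarrow> trace (A ** Y) = 0"
proof (induction Y rule: MS.span_induct_alt)
  case base then show ?case by (simp add: trace_0[unfolded mat_0])
next
  case (step c x y)
  then obtain j where xj: "x = mat_pow A j" by auto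
  have "trace (A ** x) = 0" unfolding xj using tr by (metis mat_pow.simps(2) le_add1 plus_1_eq_Suc)
  then show ?case using step
    by (simp add: mm_add_l mat_scale_mult_right trace_add trace_mat_scale)
qed

lemma chain_dim:
  fixes A :: "'a::field^'n^'n"
  shows "\<exists>r\<ge>1. mat_pow A r \<in> MS.span (mat_pow A ` {Suc r..})"
proof (rule ccontr)
  assume "\<not> ?thesis"
  then have nr: "\<And>r. r \<ge> 1 \<Longrightarrow> mat_pow A r \<notin> MS.span (mat_pow A ` {Suc r..})" by blast
  have lt: "MS.dim (mat_pow A ` {Suc k..}) < MS.dim (mat_pow A ` {k..})" if "k \<ge> 1" for k
  proof (rule MS.dim_psubset)
    have "MS.span (mat_pow A ` {Suc k..}) \<subseteq> MS.span (mat_pow A ` {k..})"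
      by (rule MS.span_mono) auto
    moreover have "mat_pow A k \<in> MS.span (mat_pow A ` {k..})" by (rule MS.span_base) auto
    ultimately show "MS.span (mat_pow A ` {Suc k..}) \<subset> MS.span (mat_pow A ` {k..})"
      using nr[OF that] by blast
  qed
  have ind: "MS.dim (mat_pow A ` {Suc m..}) + m \<le> MS.dim (mat_pow A ` {1..})" for m
  proof (induction m)
    case 0 then show ?case by simp
  next
    case (Suc m) then show ?case using lt[of "Suc m"] by simp
  qed
  have "MS.dim (mat_pow A ` {1..}) \<le> MS.dim (UNIV :: ('a^'n^'n) set)" by (rule MS.dim_subset) simp
  then show False using ind[of "Suc (MS.dim (UNIV :: ('a^'n^'n) set))"] by simp
qed

lemma nilpotent_of_trace:
  fixes A :: "'a::field^'n^'n"
  assumes ch: "CHAR('a) = 0 \<or> CARD('n) < CHAR('a)"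
    and tr: "\<forall>m\<ge>1. trace (mat_pow A m) = 0"
  shows "\<exists>N. mat_pow A N = 0"
proof -
  obtain r where r1: "r \<ge> 1" and rs: "mat_pow A r \<in> MS.span (mat_pow A ` {Suc r..})"
    using chain_dim by blast
  have "\<exists>T\<in>QA A. Z = mat_pow A (Suc r) ** T" if "Z \<in> MS.span (mat_pow A ` {Suc r..})" for Z
    using that
  proof (induction rule: MS.span_induct_alt)
    case base
    have "(0::'a^'n^'n) \<in> QA A" by (simp add: MS.span_zero)
    then show ?case by (intro bexI[of _ 0]) auto
  next
    case (step c x y)
    then obtain j where j: "j \<ge> Suc r" "x = mat_pow A j" by auto
    obtain T where T: "T \<in> QA A" "y = mat_pow A (Suc r) ** T" using step by blast
    have "x = mat_pow A (Suc r) ** mat_pow A (j - Suc r)" using j by (metis le_add_diff_inverse mat_pow_add)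
    then have "mat_scale c x + y = mat_pow A (Suc r) ** (mat_scale c (mat_pow A (j - Suc r)) + T)"
      using T by (simp add: mm_add_l mat_scale_mult_right)
    moreover have "mat_scale c (mat_pow A (j - Suc r)) + T \<in> QA A"
      using T by (simp add: MS.span_add MS.span_scale QA_pow)
    ultimately show ?case by blast
  qed
  then obtain T where TQ: "T \<in> QA A" and rT: "mat_pow A r = mat_pow A (Suc r) ** T" using rs by blast
  have key: "mat_pow A r = mat_pow A (r + k) ** mat_pow T k" for k
  proof (induction k)
    case 0 then show ?case by simp
  next
    case (Suc k)
    have "r + Suc k = k + Suc r" by simp
    then have "mat_pow A (r + Suc k) = mat_pow A k ** mat_pow A (Suc r)" by (metis mat_pow_add)
    then have "mat_pow A (r + Suc k) ** mat_pow T (Suc k) = (mat_pow A k ** mat_pow A (Suc r)) ** (T ** mat_pow T k)"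
      by simp
    also have "\<dots> = mat_pow A k ** (mat_pow A (Suc r) ** T) ** mat_pow T k"
      by (simp add: matrix_mul_assoc)
    also have "\<dots> = mat_pow A k ** mat_pow A r ** mat_pow T k"
      by (simp only: rT[symmetric])
    also have "\<dots> = mat_pow A (r + k) ** mat_pow T k"
      by (metis mat_pow_add add.commute)
    finally show ?case using Suc by simp
  qed
  define Tr where "Tr = mat_pow T r"
  have TrQ: "Tr \<in> QA A" unfolding Tr_def using TQ by (rule QA_matpow)
  have k2: "mat_pow A r = mat_pow A r ** (mat_pow A r ** Tr)"
    using key[of r] unfolding Tr_def by (simp add: mat_pow_add matrix_mul_assoc)
  define E where "E = mat_pow A r ** Tr"
  have comm: "Tr ** mat_pow A r = mat_pow A r ** Tr" using QA_comm[OF TrQ QA_pow] .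
  have EE: "E ** E = E"
  proof -
    have "E ** E = mat_pow A r ** (Tr ** mat_pow A r) ** Tr"
      unfolding E_def by (simp add: matrix_mul_assoc)
    also have "\<dots> = (mat_pow A r ** (mat_pow A r ** Tr)) ** Tr"
      by (simp add: comm matrix_mul_assoc)
    also have "\<dots> = E" using k2 unfolding E_def by simp
    finally show ?thesis .
  qed
  obtain r' where r': "r = Suc r'" using r1 by (cases r) auto
  have trE: "trace E = 0"
  proof -
    have "E = A ** (mat_pow A r' ** Tr)" unfolding E_def r' by (simp add: matrix_mul_assoc)
    moreover have "mat_pow A r' ** Tr \<in> QA A" using QA_mult[OF QA_pow TrQ] .
    ultimately show ?thesis using QA_trace[OF tr] by simp
  qed
  have "E = 0" using idem_trace0[OF EE trE ch] .
  then have "mat_pow A r = 0" using k2 unfolding E_def by simp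
  then show ?thesis by blast
qed


lemma mathieu_lr: "is_mathieu \<theta> V \<Longrightarrow> left_mathieu V \<or> right_mathieu V"
proof (cases \<theta>)
  case TwoSidedMS
  assume "is_mathieu \<theta> V"
  then have "two_sided_mathieu V" using TwoSidedMS by simp
  then have "left_mathieu V" unfolding two_sided_mathieu_def left_mathieu_def
    by (metis matrix_mul_rid)
  then show ?thesis by simp
qed auto

lemma trace_transpose': "trace (transpose (X::'a::field^'n^'n)) = trace X"
  by (simp add: trace_def transpose_def)

lemma transpose_add': "transpose ((X::'a::field^'n^'n) + Y) = transpose X + transpose Y"
  by (simp add: transpose_def vec_eq_iff)

lemma transpose_scale': "transpose (mat_scale c (X::'a::field^'n^'n)) = mat_scale c (transpose X)"
  by (simp add: transpose_def vec_eq_iff)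

lemma left_LP:
  assumes "left_mathieu V" and mem: "\<And>X. X \<in> V \<longleftrightarrow> \<phi> X = 0"
    and ee: "e ** e = e" and pe: "\<phi> e = 0"
  shows "\<phi> (b ** e) = 0"
proof -
  have "\<forall>m\<ge>1. mat_pow e m \<in> V" using idem_pow[OF ee] pe mem by simp
  then obtain N where "\<forall>m\<ge>N. b ** mat_pow e m \<in> V" using assms(1) unfolding left_mathieu_def by blast
  then have "b ** mat_pow e (Suc N) \<in> V" using le_SucI by blast
  then show ?thesis using idem_pow[OF ee, of "Suc N"] mem by simp
qed

lemma right_LP:
  assumes "right_mathieu V" and mem: "\<And>X. X \<in> V \<longleftrightarrow> \<phi> X = 0"
    and ee: "e ** e = e" and pe: "\<phi> e = 0"
  shows "\<phi> (e ** b) = 0"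
proof -
  have "\<forall>m\<ge>1. mat_pow e m \<in> V" using idem_pow[OF ee] pe mem by simp
  then obtain N where "\<forall>m\<ge>N. mat_pow e m ** b \<in> V" using assms(1) unfolding right_mathieu_def by blast
  then have "mat_pow e (Suc N) ** b \<in> V" using le_SucI by blast
  then show ?thesis using idem_pow[OF ee, of "Suc N"] mem by simp
qed

lemma codim_mathieu:
  fixes V :: "('a::field^'n^'n) set"
  assumes cV: "codim_one V" and mV: "is_mathieu \<theta> V"
  shows "V = {A. trace A = 0} \<and> \<not> (0 < CHAR('a) \<and> CHAR('a) \<le> CARD('n))"
proof -
  obtain \<phi> where lin: "linf \<phi>" and mem: "\<And>X. X \<in> V \<longleftrightarrow> \<phi> X = 0" and nz: "\<exists>X. \<phi> X \<noteq> 0"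
    using codim_one_functional[OF cV] by blast
  have res: "(\<exists>c. c \<noteq> 0 \<and> (\<forall>X. \<phi> X = c * trace X)) \<and> \<not> (0 < CHAR('a) \<and> CHAR('a) \<le> CARD('n))"
  proof (cases "left_mathieu V")
    case True
    show ?thesis
      by (rule core_left[OF lin nz]) (rule left_LP[OF True mem], auto)
  next
    case False
    then have R: "right_mathieu V" using mathieu_lr[OF mV] by simp
    define \<psi> where "\<psi> X = \<phi> (transpose X)" for X :: "'a^'n^'n"
    have linp: "linf \<psi>" using lin unfolding linf_def \<psi>_def by (simp add: transpose_add' transpose_scale')
    have nzp: "\<exists>X. \<psi> X \<noteq> 0" using nz unfolding \<psi>_def by (metis transpose_transpose)
    have LPp: "\<psi> (b ** e) = 0" if ee: "e ** e = e" and pe: "\<psi> e = 0" for e b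
    proof -
      have "transpose e ** transpose e = transpose e" using ee by (metis matrix_transpose_mul)
      then have "\<phi> (transpose e ** transpose b) = 0" using right_LP[OF R mem] pe unfolding \<psi>_def by blast
      then show ?thesis unfolding \<psi>_def by (simp add: matrix_transpose_mul)
    qed
    have "(\<exists>c. c \<noteq> 0 \<and> (\<forall>X. \<psi> X = c * trace X)) \<and> \<not> (0 < CHAR('a) \<and> CHAR('a) \<le> CARD('n))"
      by (rule core_left[OF linp nzp LPp])
    then show ?thesis unfolding \<psi>_def by (metis transpose_transpose trace_transpose')
  qed
  then obtain c where c0: "c \<noteq> 0" and ph: "\<And>X. \<phi> X = c * trace X" by blast
  have "V = {A. trace A = 0}" using mem ph c0 by auto
  then show ?thesis using res by blast
qed

lemma H_subspace: "MS.subspace {A :: 'a::field^'n^'n. trace A = 0}"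
  unfolding MS.subspace_def by (simp add: trace_add trace_mat_scale) (simp add: trace_def)

lemma H_codim: "codim_one {A :: 'a::field^'n^'n. trace A = 0}"
proof -
  obtain i0 :: 'n where True by simp
  show ?thesis
  proof (rule codim_oneI[OF H_subspace, of "emat i0 i0"])
    show "emat i0 i0 \<notin> {A :: 'a::field^'n^'n. trace A = 0}" by (simp add: trace_emat)
  next
    fix Y :: "'a^'n^'n"
    show "\<exists>c. Y - mat_scale c (emat i0 i0) \<in> {A. trace A = 0}"
      by (intro exI[of _ "trace Y"]) (simp add: trace_sub trace_mat_scale trace_emat)
  qed
qed

lemma H_mathieu:
  assumes ch: "CHAR('a) = 0 \<or> CARD('n) < CHAR('a)"
  shows "is_mathieu \<theta> {A :: 'a::field^'n^'n. trace A = 0}"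
proof -
  have nil: "\<exists>N. \<forall>m\<ge>N. mat_pow a m = 0" if "\<forall>m\<ge>1. mat_pow a m \<in> {A :: 'a::field^'n^'n. trace A = 0}" for a
  proof -
    have "\<forall>m\<ge>1. trace (mat_pow a m) = 0" using that by simp
    then obtain N where N: "mat_pow a N = 0" using nilpotent_of_trace[OF ch] by blast
    have "mat_pow a m = 0" if "m \<ge> N" for m
      using N that by (metis le_add_diff_inverse mat_pow_add mm_zero_l)
    then show ?thesis by blast
  qed
  have z: "(0::'a^'n^'n) \<in> {A. trace A = 0}" by (simp add: trace_def)
  have L: "left_mathieu {A :: 'a::field^'n^'n. trace A = 0}"
    unfolding left_mathieu_def ksubspace_def using H_subspace nil z by (metis mm_zero_r)
  have R: "right_mathieu {A :: 'a::field^'n^'n. trace A = 0}"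
    unfolding right_mathieu_def ksubspace_def using H_subspace nil z by (metis mm_zero_l)
  have T: "two_sided_mathieu {A :: 'a::field^'n^'n. trace A = 0}"
    unfolding two_sided_mathieu_def ksubspace_def using H_subspace nil z by (metis mm_zero_l mm_zero_r)
  show ?thesis using L R T by (cases \<theta>) auto
qed

theorem theorem5p1:
  fixes \<theta> :: mathieu_type
  defines "H \<equiv> {A :: 'a::field^'n^'n. trace A = 0}"
  shows "((CHAR('a) = 0 \<or> CARD('n) < CHAR('a)) \<longrightarrow>
           (is_mathieu \<theta> H \<and> codim_one H \<and>
            (\<forall>V :: ('a^'n^'n) set. is_mathieu \<theta> V \<and> codim_one V \<longrightarrow> V = H))) \<and>
         ((0 < CHAR('a) \<and> CHAR('a) \<le> CARD('n)) \<longrightarrow>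
           \<not> (\<exists>V :: ('a^'n^'n) set. is_mathieu \<theta> V \<and> codim_one V))"
  unfolding H_def using H_mathieu H_codim codim_mathieu by blast

end
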